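(* Let $\mathcal{A}$ be a unital Banach algebra over $\mathbb{K}=\mathbb{R}$ or $\mathbb{C}$ (a complete normed algebra with $\|AB\|\le\|A\|\,\|B\|$), and let $X,Y\in\mathcal{A}$. Let $(C_k)_{k\ge 2}$ be the homogeneous Lie polynomials of degree $k$ in the symmetric Zassenhaus formula (described in the context), evaluated at $X,Y$ in $\mathcal{A}$ (commutators interpreted as $[A,B]=AB-BA$). Suppose the power series $$ M(\lambda)=\lambda(\|X\|+\|Y\|)+2\sum_{j=2}^{\infty}\lambda^j\|C_j\| $$ has radius of convergence $r_z>0$. For $n\ge 2$ define $$ \Psi_n(\lambda)={\rm e}^{\frac{\lambda}{2}X}\,{\rm e}^{\frac{\lambda}{2}Y}\,{\rm e}^{\lambda^2C_2}\,{\rm e}^{\lambda^3C_3}\cdots{\rm e}^{\lambda^nC_n}\,{\rm e}^{\lambda^nC_n}\cdots{\rm e}^{\lambda^3C_3}\,{\rm e}^{\lambda^2C_2}\,{\rm e}^{\frac{\lambda}{2}Y}\,{\rm e}^{\frac{\lambda}{2}X}. $$ Then $\lim_{n\to\infty}\Psi_n(\lambda)={\rm e}^{\lambda(X+Y)}$ for every $\lambda$ in the ball $B(0,r_z)$, and the convergence is uniform on every compact subset of $B(0,r_z)$.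
   Context: The symmetric Zassenhaus formula: for non-commuting indeterminates $X,Y$ there is a unique sequence $(C_k)_{k\ge2}$ of homogeneous Lie polynomials in $X,Y$ with $C_k$ of degree $k$ such that, as formal power series, ${\rm e}^{X+Y}={\rm e}^{X/2}{\rm e}^{Y/2}{\rm e}^{C_2}{\rm e}^{C_3}\cdots{\rm e}^{C_k}\cdots{\rm e}^{C_k}\cdots{\rm e}^{C_3}{\rm e}^{C_2}{\rm e}^{Y/2}{\rm e}^{X/2}$ (indices increasing then decreasing); equivalently, replacing $X,Y$ by $\lambda X,\lambda Y$, one has $C_k(\lambda X,\lambda Y)=\lambda^kC_k(X,Y)$. Here $C_k$ denotes $C_k(X,Y)\in\mathcal{A}$. Exponentials in $\mathcal{A}$ are defined by the usual power series. *)

theory Defs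
  imports "HOL-Analysis.Analysis"
begin

text \<open>A series is a function from words to coefficients; in a word, False stands for
  the letter X and True for the letter Y.\<close>

type_synonym ncs = "bool list \<Rightarrow> rat"

definition ncs_X :: ncs where "ncs_X w = (if w = [False] then 1 else 0)"
definition ncs_Y :: ncs where "ncs_Y w = (if w = [True] then 1 else 0)"
definition ncs_one :: ncs where "ncs_one w = (if w = [] then 1 else 0)"
definition ncs_add :: "ncs \<Rightarrow> ncs \<Rightarrow> ncs" where "ncs_add f g w = f w + g w"
definition ncs_scale :: "rat \<Rightarrow> ncs \<Rightarrow> ncs" where "ncs_scale c f w = c * f w"

definition ncs_mult :: "ncs \<Rightarrow> ncs \<Rightarrow> ncs" where
  "ncs_mult f g w = (\<Sum>i\<le>length w. f (take i w) * g (drop i w))"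

definition ncs_bracket :: "ncs \<Rightarrow> ncs \<Rightarrow> ncs" where
  "ncs_bracket f g w = ncs_mult f g w - ncs_mult g f w"

primrec ncs_pow :: "ncs \<Rightarrow> nat \<Rightarrow> ncs" where
  "ncs_pow f 0 = ncs_one"
| "ncs_pow f (Suc n) = ncs_mult f (ncs_pow f n)"

text \<open>Exponential series; for series with zero constant term (the only ones used)
  the powers f^n with n > length w do not contribute to the coefficient of w.\<close>
definition ncs_exp :: "ncs \<Rightarrow> ncs" where
  "ncs_exp f w = (\<Sum>n\<le>length w. ncs_pow f n w / fact n)"

definition ncs_prod_list :: "ncs list \<Rightarrow> ncs" where
  "ncs_prod_list fs = foldr ncs_mult fs ncs_one"

inductive_set lie_polys :: "ncs set" where
  lie_X: "ncs_X \<in> lie_polys"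
| lie_Y: "ncs_Y \<in> lie_polys"
| lie_add: "p \<in> lie_polys \<Longrightarrow> q \<in> lie_polys \<Longrightarrow> ncs_add p q \<in> lie_polys"
| lie_scale: "p \<in> lie_polys \<Longrightarrow> ncs_scale c p \<in> lie_polys"
| lie_bracket: "p \<in> lie_polys \<Longrightarrow> q \<in> lie_polys \<Longrightarrow> ncs_bracket p q \<in> lie_polys"

definition ncs_homogeneous :: "nat \<Rightarrow> ncs \<Rightarrow> bool" where
  "ncs_homogeneous k p \<longleftrightarrow> (\<forall>w. length w \<noteq> k \<longrightarrow> p w = 0)"

definition ncs_tendsto :: "(nat \<Rightarrow> ncs) \<Rightarrow> ncs \<Rightarrow> bool" where
  "ncs_tendsto P S \<longleftrightarrow> (\<forall>w. \<exists>N. \<forall>n\<ge>N. P n w = S w)"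

definition zass_formal_prod :: "(nat \<Rightarrow> ncs) \<Rightarrow> nat \<Rightarrow> ncs" where
  "zass_formal_prod C n =
     ncs_prod_list ([ncs_exp (ncs_scale (1/2) ncs_X), ncs_exp (ncs_scale (1/2) ncs_Y)]
       @ map (\<lambda>k. ncs_exp (C k)) [2..<Suc n]
       @ map (\<lambda>k. ncs_exp (C k)) (rev [2..<Suc n])
       @ [ncs_exp (ncs_scale (1/2) ncs_Y), ncs_exp (ncs_scale (1/2) ncs_X)])"

definition sym_zassenhaus :: "(nat \<Rightarrow> ncs) \<Rightarrow> bool" where
  "sym_zassenhaus C \<longleftrightarrow>
     (\<forall>k\<ge>2. C k \<in> lie_polys \<and> ncs_homogeneous k (C k)) \<and>
     ncs_tendsto (zass_formal_prod C) (ncs_exp (ncs_add ncs_X ncs_Y))"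

definition eval_word :: "'a::monoid_mult \<Rightarrow> 'a \<Rightarrow> bool list \<Rightarrow> 'a" where
  "eval_word A B w = prod_list (map (\<lambda>b. if b then B else A) w)"

definition eval_hom :: "nat \<Rightarrow> ncs \<Rightarrow> 'a::real_normed_algebra_1 \<Rightarrow> 'a \<Rightarrow> 'a" where
  "eval_hom k p A B = (\<Sum>w\<in>{w::bool list. length w = k}. real_of_rat (p w) *\<^sub>R eval_word A B w)"

text \<open>Scalars of the ground field 'k (R or C) act on the algebra via iota:
  a unital, central, isometric ring embedding extending the real structure.\<close>
definition scalar_action :: "('k::real_normed_field \<Rightarrow> 'a::real_normed_algebra_1) \<Rightarrow> bool" where
  "scalar_action \<iota> \<longleftrightarrow>
     (\<forall>a b. \<iota> (a + b) = \<iota> a + \<iota> b) \<and> (\<forall>a b. \<iota> (a * b) = \<iota> a * \<iota> b) \<and>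
     (\<forall>r. \<iota> (of_real r) = of_real r) \<and> (\<forall>c x. \<iota> c * x = x * \<iota> c) \<and>
     (\<forall>c x. norm (\<iota> c * x) = norm c * norm x)"

definition Psi :: "('k::real_normed_field \<Rightarrow> 'a::{real_normed_algebra_1,banach}) \<Rightarrow>
    (nat \<Rightarrow> ncs) \<Rightarrow> 'a \<Rightarrow> 'a \<Rightarrow> nat \<Rightarrow> 'k \<Rightarrow> 'a" where
  "Psi \<iota> C X Y n l =
     exp (\<iota> (l / 2) * X) * exp (\<iota> (l / 2) * Y)
     * prod_list (map (\<lambda>k. exp (\<iota> (l ^ k) * eval_hom k (C k) X Y)) [2..<Suc n])
     * prod_list (map (\<lambda>k. exp (\<iota> (l ^ k) * eval_hom k (C k) X Y)) (rev [2..<Suc n]))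
     * exp (\<iota> (l / 2) * Y) * exp (\<iota> (l / 2) * X)"

definition M_coeff :: "(nat \<Rightarrow> ncs) \<Rightarrow> 'a::{real_normed_algebra_1,banach} \<Rightarrow> 'a \<Rightarrow> nat \<Rightarrow> real" where
  "M_coeff C X Y j = (if j = 0 then 0 else if j = 1 then norm X + norm Y
                      else 2 * norm (eval_hom j (C j) X Y))"

end

theory Submission
  imports Defs
begin

definition cauchy :: "(nat \<Rightarrow> 'a::ring_1) \<Rightarrow> (nat \<Rightarrow> 'a) \<Rightarrow> nat \<Rightarrow> 'a" where
  "cauchy a b m = (\<Sum>i\<le>m. a i * b (m - i))"

definition delta0 :: "nat \<Rightarrow> 'a::ring_1" where
  "delta0 m = (if m = 0 then 1 else 0)"

definition cprod :: "(nat \<Rightarrow> 'a::ring_1) list \<Rightarrow> nat \<Rightarrow> 'a" where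
  "cprod as = foldr cauchy as delta0"

definition ecoef :: "nat \<Rightarrow> 'a::real_normed_algebra_1 \<Rightarrow> nat \<Rightarrow> 'a" where
  "ecoef k Z m = (if k dvd m then Z ^ (m div k) /\<^sub>R fact (m div k) else 0)"

definition absc :: "real \<Rightarrow> (nat \<Rightarrow> 'a::real_normed_algebra_1) \<Rightarrow> bool" where
  "absc r a \<longleftrightarrow> summable (\<lambda>m. norm (a m) * r ^ m)"

definition FT :: "'a::{real_normed_algebra_1,banach} \<Rightarrow> (nat \<Rightarrow> 'a) \<Rightarrow> 'a" where
  "FT T a = (\<Sum>m. T ^ m * a m)"

definition central :: "'a::ring_1 \<Rightarrow> bool" where
  "central T \<longleftrightarrow> (\<forall>x. T * x = x * T)"

lemma central_power: "central T \<Longrightarrow> central (T ^ n)"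
  unfolding central_def
proof (induction n)
  case (Suc n)
  show ?case
  proof
    fix x
    have "T ^ Suc n * x = T * (T ^ n * x)" by (simp add: mult.assoc)
    also have "\<dots> = T * (x * T ^ n)" using Suc by simp
    also have "\<dots> = x * T ^ Suc n" using Suc.prems
      by (metis mult.assoc power_Suc2)
    finally show "T ^ Suc n * x = x * T ^ Suc n" .
  qed
qed simp

lemma central_pow_mult: "central T \<Longrightarrow> (T ^ k * Z) ^ n = T ^ (k * n) * Z ^ n"
proof (induction n)
  case (Suc n)
  have c: "central (T ^ k)" using central_power Suc.prems by blast
  have "(T ^ k * Z) ^ Suc n = T ^ k * Z * (T ^ (k * n) * Z ^ n)" using Suc by simp
  also have "\<dots> = T ^ k * (Z * T ^ (k * n)) * Z ^ n" by (simp add: mult.assoc)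
  also have "\<dots> = T ^ k * (T ^ (k * n) * Z) * Z ^ n"
    using central_power[OF Suc.prems, of "k*n"] unfolding central_def by metis
  also have "\<dots> = T ^ (k * Suc n) * Z ^ Suc n"
    by (simp add: mult.assoc power_add)
  finally show ?case .
qed simp

lemma exp_FT_sums:
  fixes T Z :: "'a::{real_normed_algebra_1,banach}"
  assumes "central T" "k \<ge> 1"
  shows "(\<lambda>m. T ^ m * ecoef k Z m) sums exp (T ^ k * Z)"
proof -
  have sm: "strict_mono (\<lambda>n. k * n)" using assms(2) by (simp add: strict_mono_def)
  have "(\<lambda>n. (T ^ k * Z) ^ n /\<^sub>R fact n) sums exp (T ^ k * Z)" by (rule exp_converges)
  moreover have "(\<lambda>n. (T ^ k * Z) ^ n /\<^sub>R fact n) = (\<lambda>n. (\<lambda>m. T ^ m * ecoef k Z m) (k * n))"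
  proof (rule ext)
    fix n
    have "(T ^ k * Z) ^ n = T ^ (k * n) * Z ^ n" by (rule central_pow_mult[OF assms(1)])
    moreover have "k * n div k = n" using assms(2) by simp
    ultimately show "(T ^ k * Z) ^ n /\<^sub>R fact n = (\<lambda>m. T ^ m * ecoef k Z m) (k * n)"
      by (simp add: ecoef_def)
  qed
  ultimately have "(\<lambda>n. (\<lambda>m. T ^ m * ecoef k Z m) (k * n)) sums exp (T ^ k * Z)" by simp
  moreover have "(\<lambda>m. T ^ m * ecoef k Z m) n = 0" if "n \<notin> range (\<lambda>n. k * n)" for n
    using that by (auto simp: ecoef_def elim!: dvdE)
  ultimately show ?thesis
    using sums_mono_reindex[OF sm, of "\<lambda>m. T ^ m * ecoef k Z m"] by simp
qed

lemma FT_ecoef: "central T \<Longrightarrow> k \<ge> 1 \<Longrightarrow> FT T (ecoef k Z) = exp (T ^ k * Z)"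
  unfolding FT_def using sums_unique[OF exp_FT_sums[of T k Z]] by simp

lemma norm_ecoef_le: "norm (ecoef k Z m) \<le> ecoef k (norm Z) m"
  by (auto simp: ecoef_def norm_power_ineq divide_right_mono)

lemma ecoef_nonneg: "z \<ge> 0 \<Longrightarrow> (0::real) \<le> ecoef k z m"
  by (auto simp: ecoef_def)

lemma absc_ecoef:
  fixes Z :: "'a::{real_normed_algebra_1,banach}"
  assumes "k \<ge> 1" "r \<ge> 0"
  shows "absc r (ecoef k Z)"
proof -
  have "(\<lambda>m. r ^ m * ecoef k (norm Z) m) sums exp (r ^ k * norm Z)"
    using assms by (intro exp_FT_sums) (auto simp: central_def)
  hence s: "summable (\<lambda>m. ecoef k (norm Z) m * r ^ m)" by (simp add: sums_summable mult.commute)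
  show ?thesis unfolding absc_def
    by (rule summable_comparison_test[OF _ s])
       (auto intro!: exI[of _ 0] mult_right_mono norm_ecoef_le simp: assms abs_mult)
qed


lemma absc_norm_summable:
  fixes T :: "'a::{real_normed_algebra_1,banach}"
  assumes "absc r a" "norm T \<le> r"
  shows "summable (\<lambda>m. norm (T ^ m * a m))"
proof (rule summable_comparison_test[OF _ assms(1)[unfolded absc_def]])
  show "\<exists>N. \<forall>n\<ge>N. norm (norm (T ^ n * a n)) \<le> norm (a n) * r ^ n"
  proof (intro exI allI impI)
    fix n
    have "norm (T ^ n * a n) \<le> norm (T ^ n) * norm (a n)" by (rule norm_mult_ineq)
    also have "\<dots> \<le> norm T ^ n * norm (a n)" by (intro mult_right_mono norm_power_ineq) auto
    also have "\<dots> \<le> r ^ n * norm (a n)" by (intro mult_right_mono power_mono) (auto simp: assms)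
    finally show "norm (norm (T ^ n * a n)) \<le> norm (a n) * r ^ n" by (simp add: mult.commute)
  qed
qed

lemma absc_cauchy:
  fixes a b :: "nat \<Rightarrow> 'a::{real_normed_algebra_1,banach}"
  assumes "absc r a" "absc r b" "r \<ge> 0"
  shows "absc r (cauchy a b)"
proof -
  let ?a = "\<lambda>m. norm (a m) * r ^ m" and ?b = "\<lambda>m. norm (b m) * r ^ m"
  have "(\<lambda>k. \<Sum>i\<le>k. ?a i * ?b (k - i)) sums ((\<Sum>k. ?a k) * (\<Sum>k. ?b k))"
    using assms by (intro Cauchy_product_sums) (auto simp: absc_def)
  hence s: "summable (\<lambda>k. \<Sum>i\<le>k. ?a i * ?b (k - i))" by (rule sums_summable)
  show ?thesis unfolding absc_def
  proof (rule summable_comparison_test[OF _ s], intro exI allI impI)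
    fix n
    have "norm (cauchy a b n) * r ^ n \<le> (\<Sum>i\<le>n. norm (a i * b (n - i))) * r ^ n"
      unfolding cauchy_def by (intro mult_right_mono norm_sum) (auto simp: assms)
    also have "\<dots> \<le> (\<Sum>i\<le>n. norm (a i) * norm (b (n - i))) * r ^ n"
      by (intro mult_right_mono sum_mono norm_mult_ineq) (auto simp: assms)
    also have "\<dots> = (\<Sum>i\<le>n. ?a i * ?b (n - i))"
      by (auto simp: sum_distrib_right intro!: sum.cong simp flip: power_add)
    finally show "norm (norm (cauchy a b n) * r ^ n) \<le> (\<Sum>i\<le>n. ?a i * ?b (n - i))"
      using assms by simp
  qed
qed

lemma FT_cauchy:
  fixes a b :: "nat \<Rightarrow> 'a::{real_normed_algebra_1,banach}"
  assumes "absc r a" "absc r b" "norm T \<le> r" "central T"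
  shows "FT T (cauchy a b) = FT T a * FT T b"
proof -
  have "(\<lambda>k. \<Sum>i\<le>k. (T ^ i * a i) * (T ^ (k - i) * b (k - i))) sums
        ((\<Sum>k. T ^ k * a k) * (\<Sum>k. T ^ k * b k))"
    using assms by (intro Cauchy_product_sums absc_norm_summable) auto
  moreover have "(\<lambda>k. \<Sum>i\<le>k. (T ^ i * a i) * (T ^ (k - i) * b (k - i))) = (\<lambda>k. T ^ k * cauchy a b k)"
  proof
    fix k
    have "(T ^ i * a i) * (T ^ (k - i) * b (k - i)) = T ^ k * (a i * b (k - i))" if "i \<le> k" for i
    proof -
      have "(T ^ i * a i) * (T ^ (k - i) * b (k - i)) = T ^ i * (a i * T ^ (k - i)) * b (k - i)"
        by (simp add: mult.assoc)
      also have "\<dots> = T ^ i * (T ^ (k - i) * a i) * b (k - i)"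
        using central_power[OF assms(4), of "k - i"] unfolding central_def by metis
      also have "\<dots> = (T ^ i * T ^ (k - i)) * (a i * b (k - i))"
        by (simp add: mult.assoc)
      also have "\<dots> = T ^ k * (a i * b (k - i))"
        using that by (simp flip: power_add)
      finally show ?thesis .
    qed
    thus "(\<Sum>i\<le>k. (T ^ i * a i) * (T ^ (k - i) * b (k - i))) = T ^ k * cauchy a b k"
      unfolding cauchy_def by (simp add: sum_distrib_left)
  qed
  ultimately show ?thesis unfolding FT_def by (simp add: sums_iff)
qed

lemma absc_delta0: "absc r delta0"
  unfolding absc_def delta0_def
  by (rule summable_finite[of "{0}"]) auto

lemma FT_delta0: "FT T delta0 = 1"
proof -
  have "(\<lambda>m. T ^ m * delta0 m) = (\<lambda>m. if m = 0 then 1 else 0)" by (auto simp: delta0_def)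
  moreover have "(\<lambda>m. if m = 0 then (1::'a) else 0) sums 1"
    using sums_single[of 0 "\<lambda>_. (1::'a)"] by simp
  ultimately show ?thesis unfolding FT_def by (simp add: sums_iff)
qed

lemma FT_cprod:
  fixes as :: "(nat \<Rightarrow> 'a::{real_normed_algebra_1,banach}) list"
  assumes "\<forall>a\<in>set as. absc r a" "norm T \<le> r" "central T" "r \<ge> 0"
  shows "absc r (cprod as) \<and> FT T (cprod as) = prod_list (map (FT T) as)"
  using assms(1)
proof (induction as)
  case Nil
  then show ?case by (simp add: cprod_def absc_delta0 FT_delta0)
next
  case (Cons a as)
  hence ih: "absc r (cprod as)" "FT T (cprod as) = prod_list (map (FT T) as)" and ha: "absc r a" by auto
  have e: "cprod (a # as) = cauchy a (cprod as)" by (simp add: cprod_def)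
  show ?case unfolding e using ih ha assms by (simp add: absc_cauchy FT_cauchy)
qed


definition zl :: "(nat \<Rightarrow> 'b \<Rightarrow> 'c) \<Rightarrow> 'b \<Rightarrow> 'b \<Rightarrow> (nat \<Rightarrow> 'b) \<Rightarrow> nat \<Rightarrow> 'c list" where
  "zl f A B E n = [f 1 A, f 1 B] @ map (\<lambda>k. f k (E k)) [2..<Suc n]
     @ map (\<lambda>k. f k (E k)) (rev [2..<Suc n]) @ [f 1 B, f 1 A]"

lemma zl_split: "zl f A B E n = ([f 1 A, f 1 B] @ map (\<lambda>k. f k (E k)) [2..<Suc n])
     @ (map (\<lambda>k. f k (E k)) (rev [2..<Suc n]) @ [f 1 B, f 1 A])"
  by (simp add: zl_def)

lemma zl_Suc: "n \<ge> 1 \<Longrightarrow> zl f A B E (Suc n) = ([f 1 A, f 1 B] @ map (\<lambda>k. f k (E k)) [2..<Suc n])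
     @ [f (Suc n) (E (Suc n)), f (Suc n) (E (Suc n))] @ (map (\<lambda>k. f k (E k)) (rev [2..<Suc n]) @ [f 1 B, f 1 A])"
  by (simp add: zl_def)

lemma zl_Suc0: "zl f A B E (Suc 0) = zl f A B E 0"
  by (simp add: zl_def)

lemma cprod_append: "cprod (xs @ ys) = foldr cauchy xs (cprod ys)"
  by (simp add: cprod_def)

lemma cprod_Cons: "cprod (x # ys) = cauchy x (cprod ys)"
  by (simp add: cprod_def)

lemma norm_cauchy_le:
  fixes a b :: "nat \<Rightarrow> 'a::real_normed_algebra_1"
  assumes "\<forall>m. norm (a m) \<le> a' m" "\<forall>m. norm (b m) \<le> b' m"
  shows "norm (cauchy a b m) \<le> cauchy a' b' m"
proof -
  have "norm (cauchy a b m) \<le> (\<Sum>i\<le>m. norm (a i * b (m - i)))"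
    unfolding cauchy_def by (rule norm_sum)
  also have "\<dots> \<le> (\<Sum>i\<le>m. a' i * b' (m - i))"
  proof (rule sum_mono)
    fix i
    have "norm (a i * b (m - i)) \<le> norm (a i) * norm (b (m - i))" by (rule norm_mult_ineq)
    also have "\<dots> \<le> a' i * b' (m - i)"
      using assms by (intro mult_mono) (auto intro: order_trans[OF norm_ge_zero])
    finally show "norm (a i * b (m - i)) \<le> a' i * b' (m - i)" .
  qed
  finally show ?thesis unfolding cauchy_def .
qed

lemma norm_cprod_le:
  fixes as :: "(nat \<Rightarrow> 'a::real_normed_algebra_1) list"
  assumes "list_all2 (\<lambda>a a'. \<forall>m. norm (a m) \<le> a' m) as as'"
  shows "norm (cprod as m) \<le> cprod as' m"
  using assms
proof (induction arbitrary: m rule: list_all2_induct)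
  case Nil
  then show ?case by (simp add: cprod_def delta0_def)
next
  case (Cons x xs y ys)
  then show ?case unfolding cprod_Cons by (intro norm_cauchy_le) auto
qed

lemma cauchy_nonneg:
  fixes a b :: "nat \<Rightarrow> real"
  shows "(\<forall>m. 0 \<le> a m) \<Longrightarrow> (\<forall>m. 0 \<le> b m) \<Longrightarrow> 0 \<le> cauchy a b m"
  unfolding cauchy_def by (intro sum_nonneg mult_nonneg_nonneg) auto

lemma foldr_nonneg:
  fixes b :: "nat \<Rightarrow> real"
  shows "(\<forall>a\<in>set pre. \<forall>m. 0 \<le> a m) \<Longrightarrow> (\<forall>m. 0 \<le> b m) \<Longrightarrow> 0 \<le> foldr cauchy pre b m"
  by (induction pre arbitrary: m) (auto intro!: cauchy_nonneg)

lemma cprod_nonneg: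
  fixes as :: "(nat \<Rightarrow> real) list"
  shows "(\<forall>a\<in>set as. \<forall>m. 0 \<le> a m) \<Longrightarrow> 0 \<le> cprod as m"
  unfolding cprod_def by (rule foldr_nonneg) (auto simp: delta0_def)

lemma cauchy_mono_right:
  fixes a b b' :: "nat \<Rightarrow> real"
  shows "(\<forall>m. 0 \<le> a m) \<Longrightarrow> (\<forall>m. b m \<le> b' m) \<Longrightarrow> cauchy a b m \<le> cauchy a b' m"
  unfolding cauchy_def by (intro sum_mono mult_left_mono) auto

lemma foldr_mono:
  fixes b b' :: "nat \<Rightarrow> real"
  shows "(\<forall>a\<in>set pre. \<forall>m. 0 \<le> a m) \<Longrightarrow> (\<forall>m. b m \<le> b' m) \<Longrightarrow> foldr cauchy pre b m \<le> foldr cauchy pre b' m"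
proof (induction pre arbitrary: m)
  case (Cons a pre)
  then show ?case by (simp add: cauchy_mono_right)
qed simp

lemma cauchy_ge:
  fixes e b :: "nat \<Rightarrow> real"
  assumes "e 0 = 1" "\<forall>m. 0 \<le> e m" "\<forall>m. 0 \<le> b m"
  shows "b m \<le> cauchy e b m"
proof -
  have "e 0 * b (m - 0) \<le> (\<Sum>i\<le>m. e i * b (m - i))"
    by (rule member_le_sum) (auto intro!: mult_nonneg_nonneg simp: assms)
  thus ?thesis unfolding cauchy_def using assms by simp
qed

lemma foldr_agree:
  fixes b b' :: "nat \<Rightarrow> 'a::ring_1"
  shows "(\<forall>m<K. b m = b' m) \<Longrightarrow> m < K \<Longrightarrow> foldr cauchy pre b m = foldr cauchy pre b' m"
proof (induction pre arbitrary: m)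
  case (Cons a pre)
  have "(\<Sum>i\<le>m. a i * foldr cauchy pre b (m - i)) = (\<Sum>i\<le>m. a i * foldr cauchy pre b' (m - i))"
  proof (rule sum.cong[OF refl])
    fix x assume "x \<in> {..m}"
    have "m - x < K" using Cons.prems(2) by linarith
    thus "a x * foldr cauchy pre b (m - x) = a x * foldr cauchy pre b' (m - x)"
      using Cons.IH[OF Cons.prems(1)] by simp
  qed
  thus ?case by (simp only: foldr_Cons o_apply cauchy_def[of a])
qed simp

lemma cauchy_agree_delta:
  fixes e b :: "nat \<Rightarrow> 'a::ring_1"
  assumes "\<forall>i<K. e i = delta0 i" "m < K"
  shows "cauchy e b m = b m"
proof -
  have "cauchy e b m = (\<Sum>i\<le>m. if i = 0 then b m else 0)"
    unfolding cauchy_def using assms by (intro sum.cong) (auto simp: delta0_def)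
  thus ?thesis by simp
qed

lemma ecoef_agree_delta: "\<forall>i<Suc n. ecoef (Suc n) Z i = delta0 i"
  by (auto simp: ecoef_def delta0_def dest: dvd_imp_le)

lemma stab1:
  fixes A B :: "'a::{real_normed_algebra_1,banach}"
  assumes "m \<le> n"
  shows "cprod (zl ecoef A B E (Suc n)) m = cprod (zl ecoef A B E n) m"
proof (cases "n = 0")
  case True then show ?thesis by (simp add: zl_Suc0)
next
  case False
  hence n1: "n \<ge> 1" by simp
  let ?pre = "[ecoef 1 A, ecoef 1 B] @ map (\<lambda>k. ecoef k (E k)) [2..<Suc n]"
  let ?post = "map (\<lambda>k. ecoef k (E k)) (rev [2..<Suc n]) @ [ecoef 1 B, ecoef 1 A]"
  let ?e = "ecoef (Suc n) (E (Suc n))"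
  have "cprod (zl ecoef A B E (Suc n)) m = foldr cauchy ?pre (cauchy ?e (cauchy ?e (cprod ?post))) m"
    by (simp only: zl_Suc[OF n1] cprod_append) (simp add: cprod_def)
  also have "\<dots> = foldr cauchy ?pre (cprod ?post) m"
  proof (rule foldr_agree[of "Suc n"])
    show "\<forall>m<Suc n. cauchy ?e (cauchy ?e (cprod ?post)) m = cprod ?post m"
    proof (intro allI impI)
      fix j assume j: "j < Suc n"
      show "cauchy ?e (cauchy ?e (cprod ?post)) j = cprod ?post j"
        by (simp only: cauchy_agree_delta[OF ecoef_agree_delta j])
    qed
  qed (use assms in simp)
  also have "\<dots> = cprod (zl ecoef A B E n) m"
    by (simp only: zl_split cprod_append)
  finally show ?thesis .
qed

lemma stab:
  fixes A B :: "'a::{real_normed_algebra_1,banach}"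
  assumes "m \<le> n" "n \<le> n'"
  shows "cprod (zl ecoef A B E n') m = cprod (zl ecoef A B E n) m"
  using assms(2)
proof (induction n' rule: dec_induct)
  case (step k)
  have "m \<le> k" using step.hyps assms(1) by simp
  then show ?case using stab1[of m k A B E] step.IH by simp
qed simp

lemma mono1:
  fixes A B :: real
  assumes "A \<ge> 0" "B \<ge> 0" "\<forall>k. E k \<ge> 0"
  shows "cprod (zl ecoef A B E n) m \<le> cprod (zl ecoef A B E (Suc n)) m"
proof (cases "n = 0")
  case True then show ?thesis by (simp add: zl_Suc0)
next
  case False
  hence n1: "n \<ge> 1" by simp
  let ?pre = "[ecoef 1 A, ecoef 1 B] @ map (\<lambda>k. ecoef k (E k)) [2..<Suc n]"
  let ?post = "map (\<lambda>k. ecoef k (E k)) (rev [2..<Suc n]) @ [ecoef 1 B, ecoef 1 A]"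
  let ?e = "ecoef (Suc n) (E (Suc n))"
  have nn: "\<forall>m. 0 \<le> ecoef k z m" if "z \<ge> 0" for k and z :: real using ecoef_nonneg that by blast
  have pre: "\<forall>a\<in>set ?pre. \<forall>m. 0 \<le> a m" using assms nn by auto
  have post: "\<forall>m. 0 \<le> cprod ?post m" using assms nn by (intro allI cprod_nonneg) auto
  have e0: "?e 0 = 1" by (simp add: ecoef_def)
  have en: "\<forall>m. 0 \<le> ?e m" using assms nn by auto
  have "cprod (zl ecoef A B E n) m = foldr cauchy ?pre (cprod ?post) m"
    by (simp only: zl_split cprod_append)
  also have "\<dots> \<le> foldr cauchy ?pre (cauchy ?e (cauchy ?e (cprod ?post))) m"
  proof (rule foldr_mono[OF pre], intro allI)
    fix j
    have c1: "\<forall>m. 0 \<le> cauchy ?e (cprod ?post) m" using en post by (auto intro: cauchy_nonneg)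
    have "cprod ?post j \<le> cauchy ?e (cprod ?post) j" by (rule cauchy_ge[OF e0 en post])
    also have "\<dots> \<le> cauchy ?e (cauchy ?e (cprod ?post)) j" by (rule cauchy_ge[OF e0 en c1])
    finally show "cprod ?post j \<le> cauchy ?e (cauchy ?e (cprod ?post)) j" .
  qed
  also have "\<dots> = cprod (zl ecoef A B E (Suc n)) m"
    by (simp only: zl_Suc[OF n1] cprod_append) (simp add: cprod_def)
  finally show ?thesis .
qed

lemma mono:
  fixes A B :: real
  assumes "A \<ge> 0" "B \<ge> 0" "\<forall>k. E k \<ge> 0" "n \<le> n'"
  shows "cprod (zl ecoef A B E n) m \<le> cprod (zl ecoef A B E n') m"
  using assms(4)
proof (induction n' rule: dec_induct)
  case (step k)
  then show ?case using mono1[OF assms(1-3), of k m] by simp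
qed simp


definition evs :: "'a::real_normed_algebra_1 \<Rightarrow> 'a \<Rightarrow> ncs \<Rightarrow> nat \<Rightarrow> 'a" where
  "evs X Y p m = eval_hom m p X Y"

lemma finite_W: "finite {w::bool list. length w = m}"
  using finite_lists_length_eq[where A="UNIV :: bool set" and n=m] by simp

lemma eval_word_append: "eval_word A B (u @ v) = eval_word A B u * eval_word A B v"
  by (simp add: eval_word_def)

lemma bij_app: "bij_betw (\<lambda>(u, v). u @ v) ({w::bool list. length w = i} \<times> {w. length w = m - i})
   {w. length w = m}" if "i \<le> m"
proof (rule bij_betwI[where g = "\<lambda>w. (take i w, drop i w)"])
  show "(\<lambda>(u, v). u @ v) \<in> {w::bool list. length w = i} \<times> {w. length w = m - i} \<rightarrow> {w. length w = m}"
    using that by auto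
  show "(\<lambda>w. (take i w, drop i w)) \<in> {w::bool list. length w = m} \<rightarrow> {w. length w = i} \<times> {w. length w = m - i}"
    using that by auto
qed auto

lemma eval_hom_mult_term:
  fixes X Y :: "'a::real_normed_algebra_1"
  assumes "i \<le> m"
  shows "(\<Sum>w\<in>{w. length w = m}. real_of_rat (f (take i w) * g (drop i w)) *\<^sub>R eval_word X Y w)
       = eval_hom i f X Y * eval_hom (m - i) g X Y"
proof -
  let ?h = "\<lambda>w. real_of_rat (f (take i w) * g (drop i w)) *\<^sub>R eval_word X Y w"
  have "eval_hom i f X Y * eval_hom (m - i) g X Y =
     (\<Sum>u\<in>{w. length w = i}. \<Sum>v\<in>{w. length w = m - i}.
        (real_of_rat (f u) *\<^sub>R eval_word X Y u) * (real_of_rat (g v) *\<^sub>R eval_word X Y v))"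
    unfolding eval_hom_def by (rule sum_product)
  also have "\<dots> = (\<Sum>(u, v)\<in>{w. length w = i} \<times> {w. length w = m - i}.
        (real_of_rat (f u) *\<^sub>R eval_word X Y u) * (real_of_rat (g v) *\<^sub>R eval_word X Y v))"
    by (rule sum.cartesian_product)
  also have "\<dots> = (\<Sum>(u, v)\<in>{w. length w = i} \<times> {w. length w = m - i}. ?h (u @ v))"
    by (rule sum.cong[OF refl])
       (auto simp: eval_word_append of_rat_mult mult_scaleR_left mult_scaleR_right)
  also have "\<dots> = (\<Sum>x\<in>{w. length w = i} \<times> {w. length w = m - i}. ?h ((\<lambda>(u, v). u @ v) x))"
    by (simp add: case_prod_beta)
  also have "\<dots> = sum ?h {w. length w = m}"
    by (rule sum.reindex_bij_betw[OF bij_app[OF assms]])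
  finally show ?thesis by simp
qed

lemma evs_mult: "evs X Y (ncs_mult f g) m = cauchy (evs X Y f) (evs X Y g) m"
proof -
  have "evs X Y (ncs_mult f g) m =
     (\<Sum>w\<in>{w. length w = m}. \<Sum>i\<le>m. real_of_rat (f (take i w) * g (drop i w)) *\<^sub>R eval_word X Y w)"
    unfolding evs_def eval_hom_def ncs_mult_def
    by (rule sum.cong[OF refl]) (auto simp: of_rat_sum scaleR_sum_left)
  also have "\<dots> = (\<Sum>i\<le>m. \<Sum>w\<in>{w. length w = m}. real_of_rat (f (take i w) * g (drop i w)) *\<^sub>R eval_word X Y w)"
    by (rule sum.swap)
  also have "\<dots> = cauchy (evs X Y f) (evs X Y g) m"
    unfolding cauchy_def evs_def by (rule sum.cong[OF refl]) (simp add: eval_hom_mult_term)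
  finally show ?thesis .
qed

lemma evs_one: "evs X Y ncs_one m = delta0 m"
proof (cases "m = 0")
  case True
  have "{w::bool list. length w = 0} = {[]}" by auto
  then show ?thesis using True by (simp add: evs_def eval_hom_def ncs_one_def delta0_def eval_word_def)
next
  case False
  then show ?thesis by (auto simp: evs_def eval_hom_def ncs_one_def delta0_def intro!: sum.neutral)
qed

lemma evs_prod_list: "evs X Y (ncs_prod_list fs) = cprod (map (evs X Y) fs)"
proof (induction fs)
  case Nil
  then show ?case by (auto simp: ncs_prod_list_def cprod_def evs_one)
next
  case (Cons f fs)
  have "evs X Y (ncs_prod_list (f # fs)) = evs X Y (ncs_mult f (ncs_prod_list fs))"
    by (simp add: ncs_prod_list_def)
  also have "\<dots> = cauchy (evs X Y f) (evs X Y (ncs_prod_list fs))"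
    by (rule ext, rule evs_mult)
  finally show ?case using Cons by (simp add: cprod_Cons)
qed

lemma evs_hom_zero: "ncs_homogeneous k f \<Longrightarrow> i \<noteq> k \<Longrightarrow> evs X Y f i = 0"
  by (auto simp: evs_def eval_hom_def ncs_homogeneous_def intro!: sum.neutral)

lemma evs_pow:
  assumes "ncs_homogeneous k f" "k \<ge> 1"
  shows "evs X Y (ncs_pow f n) m = (if m = k * n then (evs X Y f k) ^ n else 0)"
proof (induction n arbitrary: m)
  case 0
  then show ?case by (simp add: evs_one delta0_def)
next
  case (Suc n)
  have "evs X Y (ncs_pow f (Suc n)) m = cauchy (evs X Y f) (evs X Y (ncs_pow f n)) m"
    by (simp add: evs_mult)
  also have "\<dots> = (\<Sum>i\<le>m. if i = k then evs X Y f k * evs X Y (ncs_pow f n) (m - k) else 0)"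
    unfolding cauchy_def by (rule sum.cong[OF refl]) (auto simp: evs_hom_zero[OF assms(1)])
  also have "\<dots> = (if k \<le> m then evs X Y f k * evs X Y (ncs_pow f n) (m - k) else 0)"
    by (simp add: sum.delta)
  also have "\<dots> = (if m = k * Suc n then (evs X Y f k) ^ Suc n else 0)"
    using assms(2) by (auto simp: Suc.IH)
  finally show ?case .
qed

lemma of_rat_fact': "real_of_rat (fact n) = fact n"
  by (metis of_nat_fact of_rat_of_nat_eq)

lemma evs_exp:
  assumes "ncs_homogeneous k f" "k \<ge> 1"
  shows "evs X Y (ncs_exp f) = ecoef k (evs X Y f k)"
proof
  fix m
  have "evs X Y (ncs_exp f) m =
      (\<Sum>w\<in>{w. length w = m}. \<Sum>n\<le>m. (1 / fact n) *\<^sub>R (real_of_rat (ncs_pow f n w) *\<^sub>R eval_word X Y w))"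
    unfolding evs_def eval_hom_def ncs_exp_def
    by (rule sum.cong[OF refl]) (auto simp: of_rat_sum of_rat_divide scaleR_sum_left divide_inverse_commute of_rat_mult of_rat_inverse of_rat_fact')
  also have "\<dots> = (\<Sum>n\<le>m. (1 / fact n) *\<^sub>R evs X Y (ncs_pow f n) m)"
    by (subst sum.swap) (simp add: evs_def eval_hom_def scaleR_sum_right)
  also have "\<dots> = (\<Sum>n\<le>m. if n = m div k \<and> k dvd m then (1 / fact n) *\<^sub>R (evs X Y f k) ^ n else 0)"
    by (rule sum.cong[OF refl]) (auto simp: evs_pow[OF assms] assms)
  also have "\<dots> = ecoef k (evs X Y f k) m"
    unfolding ecoef_def using assms(2) by (auto simp: sum.delta div_le_dividend divide_inverse)
  finally show "evs X Y (ncs_exp f) m = ecoef k (evs X Y f k) m" .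
qed


lemma zl_map: "map g (zl f A B E n) = zl (\<lambda>k z. g (f k z)) A B E n"
  by (simp add: zl_def)

lemma zl_comp: "zl (\<lambda>k p. g k (h k p)) A B E n = zl g (h 1 A) (h 1 B) (\<lambda>k. h k (E k)) n"
  by (simp add: zl_def)

lemma zl_cong:
  assumes "f 1 A = g 1 A" "f 1 B = g 1 B" "\<And>k. 2 \<le> k \<Longrightarrow> f k (E k) = g k (E k)"
  shows "zl f A B E n = zl g A B E n"
  unfolding zl_def using assms by (auto intro!: map_cong)

lemma zl_rel:
  assumes "\<And>k z. P (f k z) (g k z)"
  shows "list_all2 P (zl f A B E n) (zl g A B E n)"
  unfolding zl_def using assms
  by (auto intro!: list_all2_appendI simp: list.rel_map intro!: list.rel_refl)

lemma zl_set: "a \<in> set (zl f A B E n) \<Longrightarrow> a = f 1 A \<or> a = f 1 B \<or> (\<exists>k\<ge>2. a = f k (E k))"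
  by (auto simp: zl_def)

lemma zfp_zl: "zass_formal_prod C n =
   ncs_prod_list (zl (\<lambda>k p. ncs_exp p) (ncs_scale (1/2) ncs_X) (ncs_scale (1/2) ncs_Y) C n)"
  by (simp add: zass_formal_prod_def zl_def)

lemma W1: "{w::bool list. length w = Suc 0} = {[False], [True]}"
proof
  show "{w::bool list. length w = Suc 0} \<subseteq> {[False], [True]}"
  proof
    fix w :: "bool list" assume "w \<in> {w. length w = Suc 0}"
    then obtain b where "w = [b]" by (auto simp: length_Suc_conv)
    thus "w \<in> {[False], [True]}" by (cases b) auto
  qed
qed auto

lemma hom_scale_X: "ncs_homogeneous 1 (ncs_scale c ncs_X)"
  by (auto simp: ncs_homogeneous_def ncs_scale_def ncs_X_def)
lemma hom_scale_Y: "ncs_homogeneous 1 (ncs_scale c ncs_Y)"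
  by (auto simp: ncs_homogeneous_def ncs_scale_def ncs_Y_def)
lemma hom_add_XY: "ncs_homogeneous 1 (ncs_add ncs_X ncs_Y)"
  by (auto simp: ncs_homogeneous_def ncs_add_def ncs_X_def ncs_Y_def)

lemma evs_scale_X: "evs X Y (ncs_scale c ncs_X) 1 = real_of_rat c *\<^sub>R X"
  by (simp add: evs_def eval_hom_def W1 ncs_scale_def ncs_X_def eval_word_def)
lemma evs_scale_Y: "evs X Y (ncs_scale c ncs_Y) 1 = real_of_rat c *\<^sub>R Y"
  by (simp add: evs_def eval_hom_def W1 ncs_scale_def ncs_Y_def eval_word_def)
lemma eh_scale_X: "eval_hom (Suc 0) (ncs_scale c ncs_X) X Y = real_of_rat c *\<^sub>R X"
  by (simp add: eval_hom_def W1 ncs_scale_def ncs_X_def eval_word_def)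
lemma eh_scale_Y: "eval_hom (Suc 0) (ncs_scale c ncs_Y) X Y = real_of_rat c *\<^sub>R Y"
  by (simp add: eval_hom_def W1 ncs_scale_def ncs_Y_def eval_word_def)
lemma evs_add_XY: "evs X Y (ncs_add ncs_X ncs_Y) 1 = X + Y"
  by (simp add: evs_def eval_hom_def W1 ncs_add_def ncs_X_def ncs_Y_def eval_word_def)

lemma evs_zfp:
  assumes "\<forall>k\<ge>2. ncs_homogeneous k (C k)"
  shows "evs X Y (zass_formal_prod C n) =
    cprod (zl ecoef ((1/2) *\<^sub>R X) ((1/2) *\<^sub>R Y) (\<lambda>k. eval_hom k (C k) X Y) n)"
proof -
  have "evs X Y (zass_formal_prod C n) =
     cprod (zl (\<lambda>k p. evs X Y (ncs_exp p)) (ncs_scale (1/2) ncs_X) (ncs_scale (1/2) ncs_Y) C n)"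
    by (simp add: zfp_zl evs_prod_list zl_map)
  also have "zl (\<lambda>k p. evs X Y (ncs_exp p)) (ncs_scale (1/2) ncs_X) (ncs_scale (1/2) ncs_Y) C n
      = zl (\<lambda>k p. ecoef k (evs X Y p k)) (ncs_scale (1/2) ncs_X) (ncs_scale (1/2) ncs_Y) C n"
  proof (rule zl_cong)
    show "evs X Y (ncs_exp (ncs_scale (1/2) ncs_X)) = ecoef 1 (evs X Y (ncs_scale (1/2) ncs_X) 1)"
      by (rule evs_exp[OF hom_scale_X]) simp
    show "evs X Y (ncs_exp (ncs_scale (1/2) ncs_Y)) = ecoef 1 (evs X Y (ncs_scale (1/2) ncs_Y) 1)"
      by (rule evs_exp[OF hom_scale_Y]) simp
    fix k :: nat assume "2 \<le> k"
    then show "evs X Y (ncs_exp (C k)) = ecoef k (evs X Y (C k) k)"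
      using assms by (intro evs_exp) auto
  qed
  also have "\<dots> = zl ecoef ((1/2) *\<^sub>R X) ((1/2) *\<^sub>R Y) (\<lambda>k. eval_hom k (C k) X Y) n"
    unfolding zl_def by (simp add: evs_scale_X evs_scale_Y of_rat_divide) (simp add: evs_def eh_scale_X eh_scale_Y of_rat_divide)
  finally show ?thesis .
qed

lemma evs_expXY: "evs X Y (ncs_exp (ncs_add ncs_X ncs_Y)) = ecoef 1 (X + Y)"
proof -
  have "evs X Y (ncs_exp (ncs_add ncs_X ncs_Y)) = ecoef 1 (evs X Y (ncs_add ncs_X ncs_Y) 1)"
    by (rule evs_exp[OF hom_add_XY]) simp
  then show ?thesis by (simp only: evs_add_XY)
qed

lemma sa_one: "scalar_action \<iota> \<Longrightarrow> \<iota> 1 = 1"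
proof -
  assume "scalar_action \<iota>"
  hence "\<iota> (of_real 1) = of_real 1" unfolding scalar_action_def by blast
  thus ?thesis by simp
qed

lemma sa_mult: "scalar_action \<iota> \<Longrightarrow> \<iota> (a * b) = \<iota> a * \<iota> b"
  unfolding scalar_action_def by blast

lemma sa_power: "scalar_action \<iota> \<Longrightarrow> \<iota> (l ^ k) = \<iota> l ^ k"
  by (induction k) (simp_all add: sa_one sa_mult)

lemma sa_central: "scalar_action \<iota> \<Longrightarrow> central (\<iota> l)"
  unfolding scalar_action_def central_def by blast

lemma sa_norm:
  fixes \<iota> :: "'k::real_normed_field \<Rightarrow> 'b::real_normed_algebra_1"
  shows "scalar_action \<iota> \<Longrightarrow> norm (\<iota> l) = norm l"
proof -
  assume "scalar_action \<iota>"
  hence "norm (\<iota> l * 1) = norm l * norm (1::'b)" unfolding scalar_action_def by blast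
  thus ?thesis by simp
qed

lemma sa_half:
  fixes \<iota> :: "'k::real_normed_field \<Rightarrow> 'b::real_normed_algebra_1"
  assumes sa: "scalar_action \<iota>"
  shows "\<iota> (l / 2) * X = \<iota> l * ((1/2) *\<^sub>R X)"
proof -
  have e1: "(of_real (1/2) :: 'k) = 1/2" by simp
  have e: "l / 2 = l * of_real (1/2)" unfolding e1 by simp
  have m: "\<iota> (l * of_real (1/2)) = \<iota> l * \<iota> (of_real (1/2))"
    using sa unfolding scalar_action_def by blast
  have r: "\<iota> (of_real (1/2)) = (of_real (1/2) :: 'b)"
    using sa unfolding scalar_action_def by blast
  have "\<iota> (l / 2) * X = \<iota> l * of_real (1/2) * X"
    unfolding e m r ..
  also have "\<dots> = \<iota> l * (of_real (1/2) * X)" by (simp only: mult.assoc)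
  also have "\<dots> = \<iota> l * ((1/2) *\<^sub>R X)" by (simp only: scaleR_conv_of_real)
  finally show ?thesis .
qed


lemma prod_list_exp: "prod_list (map exp xs) = exp (sum_list (xs::real list))"
  by (induction xs) (simp_all add: exp_add)

lemma central_real: "central (r::real)"
  by (simp add: central_def)

lemma absc_zl:
  fixes A B :: "'a::{real_normed_algebra_1,banach}"
  assumes "r \<ge> 0"
  shows "\<forall>a\<in>set (zl ecoef A B E n). absc r a"
proof
  fix a assume "a \<in> set (zl ecoef A B E n)"
  hence "a = ecoef 1 A \<or> a = ecoef 1 B \<or> (\<exists>k\<ge>2. a = ecoef k (E k))" by (rule zl_set)
  then show "absc r a" using assms by (auto intro!: absc_ecoef)
qed

lemma FT_zl:
  fixes A B T :: "'a::{real_normed_algebra_1,banach}"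
  assumes "central T"
  shows "FT T (cprod (zl ecoef A B E n)) = prod_list (zl (\<lambda>k z. exp (T ^ k * z)) A B E n)"
proof -
  have "FT T (cprod (zl ecoef A B E n)) = prod_list (map (FT T) (zl ecoef A B E n))"
    using FT_cprod[OF absc_zl[of "norm T"] _ assms] by simp
  also have "\<dots> = prod_list (zl (\<lambda>k z. FT T (ecoef k z)) A B E n)" by (simp add: zl_map)
  also have "zl (\<lambda>k z. FT T (ecoef k z)) A B E n = zl (\<lambda>k z. exp (T ^ k * z)) A B E n"
    by (rule zl_cong) (auto simp: FT_ecoef[OF assms])
  finally show ?thesis .
qed

lemma real_major:
  fixes a b \<rho> :: real
  assumes "\<rho> \<ge> 0"
  shows "FT \<rho> (cprod (zl ecoef a b e N)) = exp (2 * (\<rho> * a) + 2 * (\<rho> * b) + 2 * (\<Sum>k\<in>{2..N}. \<rho> ^ k * e k))"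
proof -
  have "FT \<rho> (cprod (zl ecoef a b e N)) = prod_list (zl (\<lambda>k z. exp (\<rho> ^ k * z)) a b e N)"
    by (rule FT_zl[OF central_real])
  also have "zl (\<lambda>k z. exp (\<rho> ^ k * z)) a b e N = map exp (zl (\<lambda>k z. \<rho> ^ k * z) a b e N)"
    by (simp add: zl_map)
  also have "prod_list \<dots> = exp (sum_list (zl (\<lambda>k z. \<rho> ^ k * z) a b e N))"
    by (rule prod_list_exp)
  also have "sum_list (zl (\<lambda>k z. \<rho> ^ k * z) a b e N) =
      2 * (\<rho> * a) + 2 * (\<rho> * b) + 2 * (\<Sum>k\<in>{2..N}. \<rho> ^ k * e k)"
  proof -
    have r: "sum_list (map f (rev xs)) = sum_list (map f xs)" for f :: "nat \<Rightarrow> real" and xs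
      by (simp flip: rev_map add: sum_list_rev)
    have u: "sum_list (map (\<lambda>k. \<rho> ^ k * e k) [2..<Suc N]) = (\<Sum>k\<in>{2..N}. \<rho> ^ k * e k)"
      by (simp only: sum_set_upt_conv_sum_list_nat[symmetric] set_upt atLeastLessThanSuc_atLeastAtMost)
    show ?thesis unfolding zl_def by (simp add: r u del: upt_Suc)
  qed
  finally show ?thesis .
qed


lemma PQ_lemma:
  fixes X Y :: "'a::{real_normed_algebra_1,banach}"
  assumes sz: "sym_zassenhaus C" and mn: "m \<le> n"
  shows "cprod (zl ecoef ((1/2) *\<^sub>R X) ((1/2) *\<^sub>R Y) (\<lambda>k. eval_hom k (C k) X Y) n) m = ecoef 1 (X + Y) m"
proof -
  let ?P = "\<lambda>n. cprod (zl ecoef ((1/2) *\<^sub>R X) ((1/2) *\<^sub>R Y) (\<lambda>k. eval_hom k (C k) X Y) n)"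
  have hom: "\<forall>k\<ge>2. ncs_homogeneous k (C k)" using sz unfolding sym_zassenhaus_def by blast
  have tl: "\<forall>w. \<exists>N. \<forall>n\<ge>N. zass_formal_prod C n w = ncs_exp (ncs_add ncs_X ncs_Y) w"
    using sz unfolding sym_zassenhaus_def ncs_tendsto_def by blast
  have "\<forall>w\<in>{w::bool list. length w = m}. \<forall>\<^sub>F n in sequentially. zass_formal_prod C n w = ncs_exp (ncs_add ncs_X ncs_Y) w"
    using tl by (auto simp: eventually_sequentially)
  hence "\<forall>\<^sub>F n in sequentially. \<forall>w\<in>{w::bool list. length w = m}. zass_formal_prod C n w = ncs_exp (ncs_add ncs_X ncs_Y) w"
    by (rule eventually_ball_finite[OF finite_W])
  then obtain N where N: "\<And>n w. n \<ge> N \<Longrightarrow> length w = m \<Longrightarrow> zass_formal_prod C n w = ncs_exp (ncs_add ncs_X ncs_Y) w"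
    unfolding eventually_sequentially by blast
  let ?n = "max n N"
  have "?P ?n m = evs X Y (zass_formal_prod C ?n) m" unfolding evs_zfp[OF hom] ..
  also have "\<dots> = evs X Y (ncs_exp (ncs_add ncs_X ncs_Y)) m"
    unfolding evs_def eval_hom_def by (rule sum.cong) (auto simp: N)
  also have "\<dots> = ecoef 1 (X + Y) m" by (simp add: evs_expXY)
  finally have "?P ?n m = ecoef 1 (X + Y) m" .
  moreover have "?P ?n m = ?P n m" by (rule stab[OF mn]) simp
  ultimately show ?thesis by simp
qed

lemma G_bound:
  fixes A B :: "'a::{real_normed_algebra_1,banach}"
  shows "norm (cprod (zl ecoef A B E n) m) \<le> cprod (zl ecoef (norm A) (norm B) (\<lambda>k. norm (E k)) m) m"
proof -
  have eq: "zl (\<lambda>k p. ecoef k (norm p)) A B E n = zl ecoef (norm A) (norm B) (\<lambda>k. norm (E k)) n" for n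
    using zl_comp[of ecoef "\<lambda>k z. norm z" A B E n] by simp
  have "norm (cprod (zl ecoef A B E n) m) \<le> cprod (zl (\<lambda>k p. ecoef k (norm p)) A B E n) m"
    by (rule norm_cprod_le, rule zl_rel) (auto intro: norm_ecoef_le)
  also have "\<dots> = cprod (zl ecoef (norm A) (norm B) (\<lambda>k. norm (E k)) n) m" by (simp add: eq)
  also have "\<dots> \<le> cprod (zl ecoef (norm A) (norm B) (\<lambda>k. norm (E k)) m) m"
  proof (cases "m \<le> n")
    case True
    then show ?thesis using stab[of m m n "norm A" "norm B" "\<lambda>k. norm (E k)"] by simp
  next
    case False
    then show ?thesis by (intro mono) auto
  qed
  finally show ?thesis .
qed


lemma Gsum:
  fixes X Y :: "'a::{real_normed_algebra_1,banach}"
  assumes rho: "0 \<le> \<rho>" "ereal \<rho> < conv_radius (M_coeff C X Y)"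
  shows "summable (\<lambda>m. cprod (zl ecoef (norm ((1/2::real) *\<^sub>R X)) (norm ((1/2::real) *\<^sub>R Y))
            (\<lambda>k. norm (eval_hom k (C k) X Y)) m) m * \<rho> ^ m)"
proof -
  define a where "a = norm ((1/2::real) *\<^sub>R X)"
  define b where "b = norm ((1/2::real) *\<^sub>R Y)"
  define e where "e = (\<lambda>k. norm (eval_hom k (C k) X Y))"
  define P' where "P' = (\<lambda>N. cprod (zl ecoef a b e N))"
  define Mc where "Mc = M_coeff C X Y"
  have ab: "a \<ge> 0" "b \<ge> 0" "\<forall>k. e k \<ge> 0" by (auto simp: a_def b_def e_def)
  have Mnn: "0 \<le> Mc j" for j by (simp add: Mc_def M_coeff_def)
  have "summable (\<lambda>n. norm (Mc n * \<rho> ^ n))"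
    using abs_summable_in_conv_radius[of \<rho> Mc] rho by (simp add: Mc_def)
  hence Ms: "summable (\<lambda>j. Mc j * \<rho> ^ j)"
    using Mnn rho by (simp add: abs_mult)
  have ecnn: "\<forall>m. 0 \<le> ecoef k z m" if "z \<ge> 0" for k and z :: real using ecoef_nonneg that by blast
  have P'nn: "0 \<le> P' N m" for N m
  proof -
    have "\<forall>x\<in>set (zl ecoef a b e N). \<forall>m. 0 \<le> x m"
      using ab ecnn by (auto simp: zl_def)
    thus ?thesis unfolding P'_def using cprod_nonneg by blast
  qed
  have eqP: "(\<lambda>m. cprod (zl ecoef (norm ((1/2::real) *\<^sub>R X)) (norm ((1/2::real) *\<^sub>R Y))
            (\<lambda>k. norm (eval_hom k (C k) X Y)) m) m * \<rho> ^ m) = (\<lambda>m. P' m m * \<rho> ^ m)"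
    by (simp add: P'_def a_def b_def e_def)
  show ?thesis unfolding eqP
  proof (rule summableI_nonneg_bounded)
    show "0 \<le> P' n n * \<rho> ^ n" for n using P'nn rho by simp
    fix N
    have "(\<Sum>i<N. P' i i * \<rho> ^ i) = (\<Sum>i<N. P' N i * \<rho> ^ i)"
    proof (rule sum.cong[OF refl])
      fix i assume "i \<in> {..<N}"
      hence "P' N i = P' i i" unfolding P'_def by (intro stab) auto
      thus "P' i i * \<rho> ^ i = P' N i * \<rho> ^ i" by simp
    qed
    also have "\<dots> \<le> (\<Sum>i. P' N i * \<rho> ^ i)"
    proof (rule sum_le_suminf)
      have "absc \<rho> (P' N)" unfolding P'_def
        using FT_cprod[OF absc_zl[OF rho(1)], of \<rho>] rho by (simp add: central_real)
      thus "summable (\<lambda>i. P' N i * \<rho> ^ i)" unfolding absc_def using P'nn by simp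
    qed (use P'nn rho in auto)
    also have "\<dots> = FT \<rho> (P' N)" unfolding FT_def by (simp add: mult.commute)
    also have "\<dots> = exp (2 * (\<rho> * a) + 2 * (\<rho> * b) + 2 * (\<Sum>k\<in>{2..N}. \<rho> ^ k * e k))"
      unfolding P'_def by (rule real_major[OF rho(1)])
    also have "2 * (\<rho> * a) + 2 * (\<rho> * b) + 2 * (\<Sum>k\<in>{2..N}. \<rho> ^ k * e k)
             = (\<Sum>j\<in>insert 1 {2..N}. Mc j * \<rho> ^ j)"
    proof -
      have "(\<Sum>j\<in>insert 1 {2..N}. Mc j * \<rho> ^ j) = Mc 1 * \<rho> + (\<Sum>j\<in>{2..N}. Mc j * \<rho> ^ j)"
        by (subst sum.insert) auto
      also have "(\<Sum>j\<in>{2..N}. Mc j * \<rho> ^ j) = 2 * (\<Sum>k\<in>{2..N}. \<rho> ^ k * e k)"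
        by (auto simp: sum_distrib_left Mc_def M_coeff_def e_def intro!: sum.cong)
      finally show ?thesis by (simp add: Mc_def M_coeff_def a_def b_def algebra_simps)
    qed
    also have "exp \<dots> \<le> exp (\<Sum>j. Mc j * \<rho> ^ j)"
      by (subst exp_le_cancel_iff, rule sum_le_suminf[OF Ms]) (use Mnn rho in auto)
    finally show "(\<Sum>i<N. P' i i * \<rho> ^ i) \<le> exp (\<Sum>j. Mc j * \<rho> ^ j)" .
  qed
qed


lemma Psi_FT:
  fixes \<iota> :: "'k::{real_normed_field,banach} \<Rightarrow> 'a::{real_normed_algebra_1,banach}"
  assumes sa: "scalar_action \<iota>"
  shows "Psi \<iota> C X Y n l =
     FT (\<iota> l) (cprod (zl ecoef ((1/2) *\<^sub>R X) ((1/2) *\<^sub>R Y) (\<lambda>k. eval_hom k (C k) X Y) n))"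
proof -
  have "FT (\<iota> l) (cprod (zl ecoef ((1/2) *\<^sub>R X) ((1/2) *\<^sub>R Y) (\<lambda>k. eval_hom k (C k) X Y) n))
     = prod_list (zl (\<lambda>k z. exp (\<iota> l ^ k * z)) ((1/2) *\<^sub>R X) ((1/2) *\<^sub>R Y) (\<lambda>k. eval_hom k (C k) X Y) n)"
    by (rule FT_zl[OF sa_central[OF sa]])
  also have "\<dots> = Psi \<iota> C X Y n l"
    unfolding zl_def Psi_def sa_half[OF sa] sa_power[OF sa]
    by (simp add: mult.assoc)
  finally show ?thesis by simp
qed

lemma exp_FT:
  fixes \<iota> :: "'k::{real_normed_field,banach} \<Rightarrow> 'a::{real_normed_algebra_1,banach}"
  assumes sa: "scalar_action \<iota>"
  shows "exp (\<iota> l * (X + Y)) = FT (\<iota> l) (ecoef 1 (X + Y))"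
  using FT_ecoef[OF sa_central[OF sa], where k=1 and Z="X + Y"] by simp

lemma estimate:
  fixes \<iota> :: "'k::{real_normed_field,banach} \<Rightarrow> 'a::{real_normed_algebra_1,banach}"
  assumes sa: "scalar_action \<iota>" and sz: "sym_zassenhaus C"
    and rho: "0 \<le> \<rho>" "ereal \<rho> < conv_radius (M_coeff C X Y)" and l: "norm l \<le> \<rho>"
  shows "norm (Psi \<iota> C X Y n l - exp (\<iota> l * (X + Y))) \<le>
    (\<Sum>i. 2 * cprod (zl ecoef (norm ((1/2::real) *\<^sub>R X)) (norm ((1/2::real) *\<^sub>R Y))
            (\<lambda>k. norm (eval_hom k (C k) X Y)) (i + Suc n)) (i + Suc n) * \<rho> ^ (i + Suc n))"
proof -
  define P where "P = (\<lambda>n. cprod (zl ecoef ((1/2) *\<^sub>R X) ((1/2) *\<^sub>R Y) (\<lambda>k. eval_hom k (C k) X Y) n))"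
  define G where "G = (\<lambda>m. cprod (zl ecoef (norm ((1/2::real) *\<^sub>R X)) (norm ((1/2::real) *\<^sub>R Y))
            (\<lambda>k. norm (eval_hom k (C k) X Y)) m) m)"
  define Q where "Q = ecoef 1 (X + Y)"
  define T where "T = \<iota> l"
  have nT: "norm T \<le> \<rho>" using sa_norm[OF sa] l by (simp add: T_def)
  have cT: "central T" using sa_central[OF sa] by (simp add: T_def)
  have PQ: "m \<le> n \<Longrightarrow> P n m = Q m" for m n unfolding P_def Q_def by (rule PQ_lemma[OF sz])
  have nP: "norm (P n m) \<le> G m" for n m unfolding P_def G_def by (rule G_bound)
  have nQ: "norm (Q m) \<le> G m" for m using PQ[of m m] nP[of m m] by simp
  have Gs: "summable (\<lambda>m. G m * \<rho> ^ m)" unfolding G_def by (rule Gsum[OF rho])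
  have aP: "absc \<rho> (P n)" unfolding P_def using FT_cprod[OF absc_zl[OF rho(1)] nT cT rho(1)] by simp
  have aQ: "absc \<rho> Q" unfolding Q_def by (rule absc_ecoef[OF _ rho(1)]) simp
  have s1: "summable (\<lambda>m. norm (T ^ m * P n m))" by (rule absc_norm_summable[OF aP nT])
  have s2: "summable (\<lambda>m. norm (T ^ m * Q m))" by (rule absc_norm_summable[OF aQ nT])
  define h where "h = (\<lambda>m. if m \<le> n then 0 else 2 * G m * \<rho> ^ m)"
  have hb: "norm (T ^ m * P n m - T ^ m * Q m) \<le> h m" for m
  proof (cases "m \<le> n")
    case True then show ?thesis by (simp add: h_def PQ)
  next
    case False
    have "norm (T ^ m * P n m - T ^ m * Q m) \<le> norm (T ^ m * P n m) + norm (T ^ m * Q m)"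
      by (rule norm_triangle_ineq4)
    also have "\<dots> \<le> \<rho> ^ m * G m + \<rho> ^ m * G m"
    proof (rule add_mono)
      have "norm (T ^ m * P n m) \<le> norm T ^ m * norm (P n m)"
        by (rule order_trans[OF norm_mult_ineq]) (intro mult_right_mono norm_power_ineq, simp)
      also have "\<dots> \<le> \<rho> ^ m * G m" by (intro mult_mono power_mono nP nT) (use rho in auto)
      finally show "norm (T ^ m * P n m) \<le> \<rho> ^ m * G m" .
      have "norm (T ^ m * Q m) \<le> norm T ^ m * norm (Q m)"
        by (rule order_trans[OF norm_mult_ineq]) (intro mult_right_mono norm_power_ineq, simp)
      also have "\<dots> \<le> \<rho> ^ m * G m" by (intro mult_mono power_mono nQ nT) (use rho in auto)
      finally show "norm (T ^ m * Q m) \<le> \<rho> ^ m * G m" .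
    qed
    also have "\<dots> = h m" using False by (simp add: h_def)
    finally show ?thesis .
  qed
  have Gnn: "0 \<le> G m" for m using nP[of m m] norm_ge_zero order_trans by blast
  have hs: "summable h"
    by (rule summable_comparison_test[OF _ summable_mult[OF Gs, of 2]])
       (use Gnn rho in \<open>auto simp: h_def mult.assoc\<close>)
  have sd: "summable (\<lambda>m. norm (T ^ m * P n m - T ^ m * Q m))"
    by (rule summable_comparison_test[OF _ hs]) (use hb in auto)
  have "Psi \<iota> C X Y n l - exp (\<iota> l * (X + Y)) = FT T (P n) - FT T Q"
    unfolding P_def Q_def T_def by (simp add: Psi_FT[OF sa] exp_FT[OF sa])
  also have "\<dots> = (\<Sum>m. T ^ m * P n m - T ^ m * Q m)"
    unfolding FT_def by (rule suminf_diff[OF summable_norm_cancel[OF s1] summable_norm_cancel[OF s2]])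
  finally have "norm (Psi \<iota> C X Y n l - exp (\<iota> l * (X + Y))) = norm (\<Sum>m. T ^ m * P n m - T ^ m * Q m)" by simp
  also have "\<dots> \<le> (\<Sum>m. norm (T ^ m * P n m - T ^ m * Q m))" by (rule summable_norm[OF sd])
  also have "\<dots> \<le> (\<Sum>m. h m)" by (rule suminf_le[OF hb sd hs])
  also have "\<dots> = (\<Sum>i. h (i + Suc n))"
    using suminf_minus_initial_segment[OF hs, of "Suc n"] by (simp add: h_def)
  also have "\<dots> = (\<Sum>i. 2 * G (i + Suc n) * \<rho> ^ (i + Suc n))" by (simp add: h_def)
  finally show ?thesis unfolding G_def .
qed


theorem mainTheorem2:
  fixes \<iota> :: "'k::{real_normed_field,banach} \<Rightarrow> 'a::{real_normed_algebra_1,banach}"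
    and C :: "nat \<Rightarrow> ncs" and X Y :: 'a and r_z :: ereal
  assumes "scalar_action \<iota>"
    and "sym_zassenhaus C"
    and "r_z = conv_radius (M_coeff C X Y)"
    and "r_z > 0"
  shows "(\<forall>l::'k. ereal (norm l) < r_z \<longrightarrow>
            (\<lambda>n. Psi \<iota> C X Y n l) \<longlonglongrightarrow> exp (\<iota> l * (X + Y)))
       \<and> (\<forall>K. compact K \<and> K \<subseteq> {l::'k. ereal (norm l) < r_z} \<longrightarrow>
            uniform_limit K (\<lambda>n l. Psi \<iota> C X Y n l) (\<lambda>l. exp (\<iota> l * (X + Y))) sequentially)"
proof -
  note sa = assms(1) and sz = assms(2)
  define G where "G = (\<lambda>m. cprod (zl ecoef (norm ((1/2::real) *\<^sub>R X)) (norm ((1/2::real) *\<^sub>R Y))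
            (\<lambda>k. norm (eval_hom k (C k) X Y)) m) m)"
  have Gnn: "0 \<le> G m" for m
    using G_bound[of "(1/2::real) *\<^sub>R X" "(1/2::real) *\<^sub>R Y" "\<lambda>k. eval_hom k (C k) X Y" m m]
    unfolding G_def using norm_ge_zero order_trans by blast
  have unif: "uniform_limit K (\<lambda>n l. Psi \<iota> C X Y n l) (\<lambda>l. exp (\<iota> l * (X + Y))) sequentially"
    if K: "compact K" "K \<subseteq> {l::'k. ereal (norm l) < r_z}" for K
  proof (cases "K = {}")
    case True
    then show ?thesis by (simp add: uniform_limit_sequentially_iff)
  next
    case False
    have "compact (norm ` K)"
      by (rule compact_continuous_image[OF continuous_on_norm[OF continuous_on_id] K(1)])
    then obtain s where s: "s \<in> norm ` K" "\<forall>t\<in>norm ` K. t \<le> s"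
      using compact_attains_sup[of "norm ` K"] False by blast
    then obtain l0 where l0: "l0 \<in> K" "s = norm l0" by blast
    define \<rho> where "\<rho> = norm l0"
    have rho: "0 \<le> \<rho>" "ereal \<rho> < conv_radius (M_coeff C X Y)"
      using K(2) l0 assms(3) by (auto simp: \<rho>_def)
    have bnd: "\<forall>l\<in>K. norm l \<le> \<rho>" using s l0 by (auto simp: \<rho>_def)
    define g where "g = (\<lambda>m. 2 * G m * \<rho> ^ m)"
    have gs: "summable g" unfolding g_def G_def
      using summable_mult[OF Gsum[OF rho], of 2] by (simp add: mult.assoc)
    have gnn: "0 \<le> g m" for m using Gnn rho by (simp add: g_def)
    show ?thesis unfolding uniform_limit_sequentially_iff
    proof (intro allI impI)
      fix e :: real assume e: "e > 0"
      obtain N where N: "\<forall>n\<ge>N. norm (\<Sum>i. g (i + n)) < e"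
        using suminf_exist_split[OF e gs] by blast
      show "\<exists>N. \<forall>n\<ge>N. \<forall>x\<in>K. dist (Psi \<iota> C X Y n x) (exp (\<iota> x * (X + Y))) < e"
      proof (intro exI allI impI ballI)
        fix n x assume n: "N \<le> n" and x: "x \<in> K"
        have "dist (Psi \<iota> C X Y n x) (exp (\<iota> x * (X + Y))) = norm (Psi \<iota> C X Y n x - exp (\<iota> x * (X + Y)))"
          by (simp add: dist_norm)
        also have "\<dots> \<le> (\<Sum>i. g (i + Suc n))"
          using estimate[OF sa sz rho, of x n] bnd x by (simp add: g_def G_def)
        also have "\<dots> \<le> norm (\<Sum>i. g (i + Suc n))" by simp
        also have "\<dots> < e" using N[rule_format, of "Suc n"] n by simp
        finally show "dist (Psi \<iota> C X Y n x) (exp (\<iota> x * (X + Y))) < e" .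
      qed
    qed
  qed
  show ?thesis
  proof (intro conjI allI impI)
    fix l :: 'k assume "ereal (norm l) < r_z"
    hence "uniform_limit {l} (\<lambda>n l. Psi \<iota> C X Y n l) (\<lambda>l. exp (\<iota> l * (X + Y))) sequentially"
      by (intro unif) auto
    thus "(\<lambda>n. Psi \<iota> C X Y n l) \<longlonglongrightarrow> exp (\<iota> l * (X + Y))"
      by (rule tendsto_uniform_limitI) simp
  next
    fix K :: "'k set" assume "compact K \<and> K \<subseteq> {l. ereal (norm l) < r_z}"
    thus "uniform_limit K (\<lambda>n l. Psi \<iota> C X Y n l) (\<lambda>l. exp (\<iota> l * (X + Y))) sequentially"
      using unif by blast
  qed
qed

end
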